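(* Let $U^{(n)}$ be uniformly distributed on $\{1,\dots,n\}$ and, for $1\le m<n$, put $\widetilde U^{(n,m)}:=\prod_{m<p\le n,\ p\ \text{prime}}p^{\mathbbm{1}_{\{\lambda_p(U^{(n)})\ge1\}}}$. Assume that $m_n\to\infty$ and $m_n=o(n)$ as $n\to\infty$. Then $$\mathbb{E}\bigl(\log\widetilde U^{(n,m_n)}-\mathbb{E}\log\widetilde U^{(n,m_n)}\bigr)^4=O(\log^4 m_n),\qquad n\to\infty.$$
   Context: For a prime $p$ and $k\in\mathbb{N}$, $\lambda_p(k)$ is the exponent of $p$ in the prime factorization of $k$. *)

theory Defs
  imports "HOL-Probability.Probability" "HOL-Library.Landau_Symbols"
    "HOL-Computational_Algebra.Primes"
begin

definition lambda_exp :: "nat \<Rightarrow> nat \<Rightarrow> nat" where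
  "lambda_exp p k = multiplicity p k"

definition Utilde :: "nat \<Rightarrow> nat \<Rightarrow> nat \<Rightarrow> nat" where
  "Utilde n m k =
     (\<Prod>p\<in>{p. prime p \<and> m < p \<and> p \<le> n}. p ^ (if lambda_exp p k \<ge> 1 then 1 else 0))"

definition U_law :: "nat \<Rightarrow> nat pmf" where
  "U_law n = pmf_of_set {1..n}"

end

theory Submission
  imports Defs "HOL-Library.FuncSet"
begin

lemma card_multiples:
  assumes "d > (0::nat)"
  shows "card {k\<in>{1..N}. d dvd k} = N div d"
proof -
  have "{k\<in>{1..N}. d dvd k} = (\<lambda>i. d*i) ` {1..N div d}"
  proof (intro equalityI subsetI)
    fix k assume "k \<in> {k\<in>{1..N}. d dvd k}"
    then obtain i where k: "k = d*i" "1 \<le> k" "k \<le> N" by auto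
    hence "i \<ge> 1" by (cases i) auto
    moreover have "i \<le> N div d" using k assms
      by (metis div_le_mono nonzero_mult_div_cancel_left not_gr0)
    ultimately show "k \<in> (\<lambda>i. d*i) ` {1..N div d}" using k by auto
  next
    fix k assume "k \<in> (\<lambda>i. d*i) ` {1..N div d}"
    then obtain i where "i \<in> {1..N div d}" "k = d*i" by (elim imageE) 
    hence i: "k = d*i" "1 \<le> i" "i \<le> N div d" by auto
    have "d * i \<le> d * (N div d)" using i by simp
    also have "\<dots> \<le> N" by simp
    finally show "k \<in> {k\<in>{1..N}. d dvd k}" using i assms by auto
  qed
  moreover have "inj_on (\<lambda>i. d*i) {1..N div d}" using assms by (auto simp: inj_on_def)
  ultimately show ?thesis by (simp add: card_image)
qed

lemma dvd_prod_primes_iff: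
  fixes k :: nat
  assumes "finite P" "\<And>p. p \<in> P \<Longrightarrow> prime p"
  shows "(\<forall>p\<in>P. p ^ b p dvd k) \<longleftrightarrow> (\<Prod>p\<in>P. p ^ b p) dvd k"
  using assms
proof (induction P rule: finite_induct)
  case empty then show ?case by simp
next
  case (insert q P)
  have cop: "coprime (q ^ b q) (\<Prod>p\<in>P. p ^ b p)"
  proof (rule prod_coprime_right)
    fix p assume "p \<in> P"
    with insert have "prime p" "prime q" "p \<noteq> q" by auto
    then show "coprime (q ^ b q) (p ^ b p)"
      by (simp add: primes_coprime)
  qed
  show ?case
  proof
    assume "\<forall>p\<in>insert q P. p ^ b p dvd k"
    with insert have "q ^ b q dvd k" "(\<Prod>p\<in>P. p ^ b p) dvd k" by auto
    with cop show "(\<Prod>p\<in>insert q P. p ^ b p) dvd k"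
      using insert by (simp add: divides_mult)
  next
    assume h: "(\<Prod>p\<in>insert q P. p ^ b p) dvd k"
    hence "q ^ b q * (\<Prod>p\<in>P. p ^ b p) dvd k" using insert by simp
    hence "q ^ b q dvd k" "(\<Prod>p\<in>P. p ^ b p) dvd k"
      using dvd_mult_left dvd_mult_right by blast+
    with insert show "\<forall>p\<in>insert q P. p ^ b p dvd k" by auto
  qed
qed


lemma sum_ind_card:
  assumes "finite A"
  shows "(\<Sum>k\<in>A. if P k then 1 else (0::real)) = real (card {k\<in>A. P k})"
proof -
  have "(\<Sum>k\<in>A. if P k then 1 else (0::real)) = (\<Sum>k\<in>{k\<in>A. P k}. 1)"
    by (rule sum.inter_filter[symmetric, OF assms])
  thus ?thesis by simp
qed

lemma key_divisor_bound:
  fixes c :: "nat \<Rightarrow> nat \<Rightarrow> real" and a :: "nat \<Rightarrow> nat \<Rightarrow> nat"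
  assumes P: "finite P" "\<And>p. p \<in> P \<Longrightarrow> prime p" and J: "finite J"
    and c: "\<And>p j. c p j \<ge> 0"
  shows "(\<Sum>k\<in>{1..n}. \<Prod>p\<in>P. \<Sum>j\<in>J. c p j * (if p ^ a p j dvd k then 1 else 0))
          \<le> real n * (\<Prod>p\<in>P. \<Sum>j\<in>J. c p j / real (p ^ a p j))"
proof -
  let ?G = "PiE P (\<lambda>_. J)"
  define d where "d g = (\<Prod>p\<in>P. p ^ a p (g p))" for g
  have dpos: "d g > 0" for g unfolding d_def using P
    by (intro prod_pos) (auto simp: prime_gt_0_nat)
  have "(\<Sum>k\<in>{1..n}. \<Prod>p\<in>P. \<Sum>j\<in>J. c p j * (if p ^ a p j dvd k then 1 else 0))
      = (\<Sum>k\<in>{1..n}. \<Sum>g\<in>?G. \<Prod>p\<in>P. c p (g p) * (if p ^ a p (g p) dvd k then 1 else 0))"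
    using P J by (simp add: prod_sum_PiE)
  also have "\<dots> = (\<Sum>g\<in>?G. \<Sum>k\<in>{1..n}. \<Prod>p\<in>P. c p (g p) * (if p ^ a p (g p) dvd k then 1 else 0))"
    by (rule sum.swap)
  also have "\<dots> = (\<Sum>g\<in>?G. (\<Prod>p\<in>P. c p (g p)) * real (card {k\<in>{1..n}. d g dvd k}))"
  proof (rule sum.cong[OF refl])
    fix g
    have "(\<Sum>k\<in>{1..n}. \<Prod>p\<in>P. c p (g p) * (if p ^ a p (g p) dvd k then 1 else 0))
        = (\<Sum>k\<in>{1..n}. (\<Prod>p\<in>P. c p (g p)) * (if d g dvd k then 1 else 0))"
    proof (rule sum.cong[OF refl])
      fix k
      have "(\<Prod>p\<in>P. c p (g p) * (if p ^ a p (g p) dvd k then 1 else 0))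
          = (\<Prod>p\<in>P. c p (g p)) * (\<Prod>p\<in>P. (if p ^ a p (g p) dvd k then 1 else (0::real)))"
        by (rule prod.distrib)
      also have "(\<Prod>p\<in>P. (if p ^ a p (g p) dvd k then 1 else (0::real)))
          = (if d g dvd k then 1 else 0)"
        using dvd_prod_primes_iff[OF P, of "\<lambda>p. a p (g p)" k] P(1)
        unfolding d_def by (auto simp: prod_zero_iff)
      finally show "(\<Prod>p\<in>P. c p (g p) * (if p ^ a p (g p) dvd k then 1 else 0))
          = (\<Prod>p\<in>P. c p (g p)) * (if d g dvd k then 1 else 0)" .
    qed
    also have "\<dots> = (\<Prod>p\<in>P. c p (g p)) * (\<Sum>k\<in>{1..n}. (if d g dvd k then 1 else 0))"
      by (simp add: sum_distrib_left)
    also have "(\<Sum>k\<in>{1..n}. (if d g dvd k then 1 else (0::real))) = real (card {k\<in>{1..n}. d g dvd k})"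
      by (rule sum_ind_card) simp
    finally show "(\<Sum>k\<in>{1..n}. \<Prod>p\<in>P. c p (g p) * (if p ^ a p (g p) dvd k then 1 else 0))
        = (\<Prod>p\<in>P. c p (g p)) * real (card {k\<in>{1..n}. d g dvd k})" .
  qed
  also have "\<dots> \<le> (\<Sum>g\<in>?G. (\<Prod>p\<in>P. c p (g p)) * (real n / real (d g)))"
  proof (rule sum_mono)
    fix g
    have "real (card {k\<in>{1..n}. d g dvd k}) = real (n div d g)"
      using card_multiples[OF dpos] by simp
    also have "\<dots> \<le> real n / real (d g)" by (rule of_nat_div_le_of_nat)
    finally show "(\<Prod>p\<in>P. c p (g p)) * real (card {k\<in>{1..n}. d g dvd k})
        \<le> (\<Prod>p\<in>P. c p (g p)) * (real n / real (d g))"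
      by (intro mult_left_mono prod_nonneg c) auto
  qed
  also have "\<dots> = real n * (\<Sum>g\<in>?G. \<Prod>p\<in>P. c p (g p) / real (p ^ a p (g p)))"
    by (simp add: sum_distrib_left d_def prod_dividef mult.commute)
  also have "(\<Sum>g\<in>?G. \<Prod>p\<in>P. c p (g p) / real (p ^ a p (g p)))
      = (\<Prod>p\<in>P. \<Sum>j\<in>J. c p j / real (p ^ a p j))"
    using P J by (simp add: prod_sum_PiE)
  finally show ?thesis .
qed


lemma prime_Suc0: "prime (p::nat) \<Longrightarrow> Suc 0 \<le> p"
  using prime_gt_0_nat[of p] by (simp add: Suc_le_eq)


lemma prime_real_ge1: "prime (p::nat) \<Longrightarrow> 1 \<le> real p"
  using prime_gt_0_nat[of p] by linarith

lemma prime_ln_nonneg: "prime (p::nat) \<Longrightarrow> 0 \<le> ln (real p)"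
  using prime_real_ge1[of p] by simp


lemma ln_factor:
  assumes "1 \<le> k" "k \<le> N"
  shows "ln (real k) = (\<Sum>p\<in>{p. prime p \<and> p \<le> N}. real (multiplicity p k) * ln (real p))"
proof -
  have k0: "k > 0" using assms by simp
  have "real k = real (\<Prod>p \<in> prime_factors k. p ^ multiplicity p k)"
    using prime_factorization_nat[OF k0] by simp
  also have "\<dots> = (\<Prod>p \<in> prime_factors k. real p ^ multiplicity p k)" by simp
  finally have "ln (real k) = ln (\<Prod>p \<in> prime_factors k. real p ^ multiplicity p k)" by simp
  also have "\<dots> = (\<Sum>p \<in> prime_factors k. ln (real p ^ multiplicity p k))"
    by (rule ln_prod) (auto dest: in_prime_factors_imp_prime simp: prime_gt_0_nat)
  also have "\<dots> = (\<Sum>p \<in> prime_factors k. real (multiplicity p k) * ln (real p))"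
    by (intro sum.cong refl) (auto dest!: in_prime_factors_imp_prime simp: prime_gt_0_nat ln_realpow)
  also have "\<dots> = (\<Sum>p\<in>{p. prime p \<and> p \<le> N}. real (multiplicity p k) * ln (real p))"
  proof (rule sum.mono_neutral_left)
    show "finite {p. prime p \<and> p \<le> N}" by simp
    show "prime_factors k \<subseteq> {p. prime p \<and> p \<le> N}"
    proof
      fix p assume p: "p \<in> prime_factors k"
      hence "prime p" "p dvd k" by (auto simp: in_prime_factors_iff)
      hence "p \<le> k" using k0 by (simp add: dvd_imp_le)
      with \<open>prime p\<close> assms show "p \<in> {p. prime p \<and> p \<le> N}" by simp
    qed
    show "\<forall>p\<in>{p. prime p \<and> p \<le> N} - prime_factors k. real (multiplicity p k) * ln (real p) = 0"
      using k0 by (auto simp: in_prime_factors_iff not_dvd_imp_multiplicity_0)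
  qed
  finally show ?thesis .
qed

lemma div_lower:
  fixes N p :: nat
  assumes "1 \<le> p" "p \<le> N"
  shows "real N / (2 * real p) \<le> real (N div p)"
proof -
  have q: "N div p \<ge> 1" using assms by (simp add: div_greater_zero_iff Suc_le_eq)
  have "N = p * (N div p) + N mod p" by simp
  moreover have "N mod p < p" using assms by simp
  moreover have "p \<le> p * (N div p)" using q by simp
  ultimately have "N \<le> 2 * p * (N div p)" by linarith
  hence "real N \<le> 2 * real p * real (N div p)" by (metis of_nat_le_iff of_nat_mult of_nat_numeral)
  thus ?thesis using assms by (simp add: field_simps)
qed

lemma mertens_weak:
  assumes "N \<ge> (1::nat)"
  shows "(\<Sum>p\<in>{p. prime p \<and> p \<le> N}. ln (real p) / real p) \<le> 2 * ln (real N)"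
proof -
  let ?P = "{p. prime p \<and> p \<le> N}"
  have fin: "finite ?P" by simp
  have "(\<Sum>p\<in>?P. real (N div p) * ln (real p))
      = (\<Sum>p\<in>?P. (\<Sum>k\<in>{1..N}. (if p dvd k then 1 else 0)) * ln (real p))"
  proof (intro sum.cong refl)
    fix p assume "p \<in> ?P"
    hence "p > 0" by (simp add: prime_gt_0_nat)
    have "(\<Sum>k\<in>{1..N}. if p dvd k then 1 else (0::real)) = real (card {k\<in>{1..N}. p dvd k})"
      by (rule sum_ind_card) simp
    also have "\<dots> = real (N div p)" using card_multiples[OF \<open>p > 0\<close>] by simp
    finally show "real (N div p) * ln (real p) = (\<Sum>k\<in>{1..N}. if p dvd k then 1 else 0) * ln (real p)"
      by simp
  qed
  also have "\<dots> = (\<Sum>k\<in>{1..N}. \<Sum>p\<in>?P. (if p dvd k then 1 else 0) * ln (real p))"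
    by (simp add: sum_distrib_right sum.swap[of _ ?P])
  also have "\<dots> \<le> (\<Sum>k\<in>{1..N}. \<Sum>p\<in>?P. real (multiplicity p k) * ln (real p))"
  proof (intro sum_mono)
    fix k p assume k: "k \<in> {1..N}" and p: "p \<in> ?P"
    have "(if p dvd k then 1 else 0) \<le> real (multiplicity p k)"
      using k p by (auto simp: prime_multiplicity_gt_zero_iff Suc_le_eq)
    moreover have "ln (real p) \<ge> 0" using p by (auto simp: prime_ln_nonneg)
    ultimately show "(if p dvd k then 1 else 0) * ln (real p) \<le> real (multiplicity p k) * ln (real p)"
      by (intro mult_right_mono) auto
  qed
  also have "\<dots> = (\<Sum>k\<in>{1..N}. ln (real k))"
    by (intro sum.cong refl) (auto simp: ln_factor)
  also have "\<dots> \<le> (\<Sum>k\<in>{1..N}. ln (real N))"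
    by (intro sum_mono) auto
  also have "\<dots> = real N * ln (real N)" by simp
  finally have A: "(\<Sum>p\<in>?P. real (N div p) * ln (real p)) \<le> real N * ln (real N)" .
  have "(\<Sum>p\<in>?P. real N / 2 * (ln (real p) / real p)) \<le> (\<Sum>p\<in>?P. real (N div p) * ln (real p))"
  proof (intro sum_mono)
    fix p assume p: "p \<in> ?P"
    hence "real N / (2 * real p) \<le> real (N div p)" using div_lower[of p N] prime_Suc0[of p] by auto
    moreover have "ln (real p) \<ge> 0" using p by (auto simp: prime_ln_nonneg)
    ultimately have "real N / (2 * real p) * ln (real p) \<le> real (N div p) * ln (real p)"
      by (intro mult_right_mono) auto
    thus "real N / 2 * (ln (real p) / real p) \<le> real (N div p) * ln (real p)" by simp
  qed
  with A have "real N / 2 * (\<Sum>p\<in>?P. ln (real p) / real p) \<le> real N * ln (real N)"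
    by (simp add: sum_distrib_left)
  thus ?thesis using assms by (simp add: field_simps)
qed

lemma sum_inv_sqrt:
  "(\<Sum>k\<in>{1..n}. 1 / sqrt (real k)) \<le> 2 * sqrt (real n)"
proof (induction n)
  case 0 then show ?case by simp
next
  case (Suc n)
  have s: "sqrt (real n) \<le> sqrt (real (Suc n))" by simp
  have pos: "sqrt (real (Suc n)) > 0" by simp
  have "1 / sqrt (real (Suc n)) \<le> 2 * sqrt (real (Suc n)) - 2 * sqrt (real n)"
  proof -
    have "sqrt (real (Suc n)) * sqrt (real (Suc n)) = real n + 1" by simp
    moreover have "sqrt (real n) * sqrt (real (Suc n)) \<le> real n + 1/2"
    proof -
      have "sqrt (real n) * sqrt (real (Suc n)) = sqrt (real n * (real n + 1))"
        by (simp add: real_sqrt_mult)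
      also have "\<dots> \<le> sqrt ((real n + 1/2)^2)"
        by (intro real_sqrt_le_mono) (simp add: power2_eq_square algebra_simps)
      also have "\<dots> = real n + 1/2" by simp
      finally show ?thesis .
    qed
    ultimately have "1 \<le> (2 * sqrt (real (Suc n)) - 2 * sqrt (real n)) * sqrt (real (Suc n))"
      by (simp add: algebra_simps)
    thus ?thesis using pos by (simp add: field_simps)
  qed
  thus ?case using Suc by simp
qed

lemma sum_inv_pow32:
  "n \<ge> 1 \<Longrightarrow> (\<Sum>k\<in>{1..n}. 1 / (real k * sqrt (real k))) \<le> 3 - 2 / sqrt (real n)"
proof (induction n rule: dec_induct)
  case base then show ?case by simp
next
  case (step n)
  let ?a = "sqrt (real n)" and ?b = "sqrt (real (Suc n))"
  have a: "?a \<ge> 1" using step by simp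
  have ab: "?a \<le> ?b" by simp
  have bb: "?b * ?b = real n + 1" by simp
  have aa: "?a * ?a = real n" by simp
  have key: "1 / (real (Suc n) * ?b) \<le> 2 / ?a - 2 / ?b"
  proof -
    have "1 / (real (Suc n) * ?b) = 1 / (?b * ?b * ?b)" using bb by simp
    have "2 / ?a - 2 / ?b = 2 * (?b - ?a) / (?a * ?b)" using a by (simp add: field_simps)
    have "(?b - ?a) * (?b + ?a) = 1" using aa bb by (simp add: algebra_simps)
    moreover have "?b + ?a > 0" using a ab by linarith
    ultimately have "?b - ?a = 1 / (?b + ?a)" by (simp add: eq_divide_eq)
    have "?a * ?b * (?b + ?a) \<le> ?b * ?b * (2 * ?b)"
      using a ab by (intro mult_mono) auto
    hence "1 / (?b * ?b * ?b) \<le> 1 / (?a * ?b * (?b + ?a) / 2)"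
      using a ab by (intro frac_le) (auto intro!: mult_pos_pos add_pos_pos)
    hence "1 / (?b * ?b * ?b) \<le> 2 / (?a * ?b * (?b + ?a))" by simp
    moreover have "2 * (?b - ?a) / (?a * ?b) = 2 / (?a * ?b * (?b + ?a))"
      using \<open>?b - ?a = 1 / (?b + ?a)\<close> by simp
    ultimately show ?thesis using \<open>1 / (real (Suc n) * ?b) = 1 / (?b * ?b * ?b)\<close>
        \<open>2 / ?a - 2 / ?b = 2 * (?b - ?a) / (?a * ?b)\<close>
      by simp
  qed
  thus ?case using step by simp
qed


definition ee :: "nat \<Rightarrow> nat \<Rightarrow> nat \<Rightarrow> nat" where
  "ee m p k = multiplicity p k - (if m < p \<and> 1 \<le> multiplicity p k then 1 else 0)"
definition cc :: "real \<Rightarrow> nat \<Rightarrow> real" where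
  "cc x j = (if j = 0 then 1 else x ^ j - x ^ (j - 1))"
definition aa :: "nat \<Rightarrow> nat \<Rightarrow> nat \<Rightarrow> nat" where
  "aa m p j = (if j = 0 then 0 else j + (if p \<le> m then 0 else 1))"

lemma Utilde_pos: "Utilde n m k > 0"
  unfolding Utilde_def by (intro prod_pos) (auto simp: prime_gt_0_nat)

lemma ln_Utilde:
  "ln (real (Utilde n m k)) =
     (\<Sum>p\<in>{p. prime p \<and> p \<le> n}. if m < p \<and> 1 \<le> multiplicity p k then ln (real p) else 0)"
proof -
  let ?P = "{p. prime p \<and> m < p \<and> p \<le> n}"
  have "ln (real (Utilde n m k)) = ln (\<Prod>p\<in>?P. real p ^ (if lambda_exp p k \<ge> 1 then 1 else 0))"
    unfolding Utilde_def by simp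
  also have "\<dots> = (\<Sum>p\<in>?P. ln (real p ^ (if lambda_exp p k \<ge> 1 then 1 else 0)))"
    by (rule ln_prod) (auto dest: prime_gt_0_nat)
  also have "\<dots> = (\<Sum>p\<in>?P. if 1 \<le> multiplicity p k then ln (real p) else 0)"
    by (intro sum.cong refl) (auto simp: lambda_exp_def)
  also have "?P = {p\<in>{p. prime p \<and> p \<le> n}. m < p}" by auto
  also have "(\<Sum>p\<in>{p\<in>{p. prime p \<and> p \<le> n}. m < p}. if 1 \<le> multiplicity p k then ln (real p) else 0)
     = (\<Sum>p\<in>{p. prime p \<and> p \<le> n}. if m < p then (if 1 \<le> multiplicity p k then ln (real p) else 0) else 0)"
    by (rule sum.inter_filter) simp
  also have "\<dots> = (\<Sum>p\<in>{p. prime p \<and> p \<le> n}. if m < p \<and> 1 \<le> multiplicity p k then ln (real p) else 0)"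
    by (intro sum.cong refl) auto
  finally show ?thesis .
qed

lemma ln_diff:
  assumes "1 \<le> k" "k \<le> n"
  shows "ln (real k) - ln (real (Utilde n m k)) =
     (\<Sum>p\<in>{p. prime p \<and> p \<le> n}. real (ee m p k) * ln (real p))"
  unfolding ln_factor[OF assms] ln_Utilde sum_subtractf[symmetric]
  by (intro sum.cong refl) (auto simp: ee_def of_nat_diff algebra_simps)

lemma cc_telescope: "(\<Sum>j\<in>{0..e}. cc x j) = x ^ e"
  by (induction e) (auto simp: cc_def)

lemma multiplicity_le_self:
  assumes "prime (p::nat)" "k \<ge> 1"
  shows "multiplicity p k \<le> k"
proof -
  have "p ^ multiplicity p k dvd k" by (rule multiplicity_dvd)
  hence "p ^ multiplicity p k \<le> k" using assms by (intro dvd_imp_le) auto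
  moreover have "p \<ge> 2" using assms by (simp add: prime_ge_2_nat)
  moreover have "multiplicity p k < 2 ^ multiplicity p k" by (rule less_exp)
  moreover have "2 ^ multiplicity p k \<le> p ^ multiplicity p k"
    using assms by (intro power_mono) (auto simp: prime_ge_2_nat)
  ultimately show ?thesis by linarith
qed

lemma pow_repr:
  assumes p: "prime p" and k: "1 \<le> k" "k \<le> n"
  shows "x ^ ee m p k = (\<Sum>j\<in>{0..n}. cc x j * (if p ^ aa m p j dvd k then 1 else 0))"
proof -
  have k0: "k \<noteq> 0" using k by simp
  have nu: "\<not> is_unit p" using prime_gt_1_nat[OF p] by simp
  have iff: "p ^ aa m p j dvd k \<longleftrightarrow> j \<le> ee m p k" for j
  proof (cases "j = 0")
    case True then show ?thesis by (simp add: aa_def)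
  next
    case False
    have "p ^ aa m p j dvd k \<longleftrightarrow> aa m p j \<le> multiplicity p k"
      by (rule power_dvd_iff_le_multiplicity[OF k0 nu])
    also have "\<dots> \<longleftrightarrow> j \<le> ee m p k" using False by (auto simp: aa_def ee_def)
    finally show ?thesis .
  qed
  have en: "ee m p k \<le> n"
    using multiplicity_le_self[OF p k(1)] k unfolding ee_def by linarith
  have "(\<Sum>j\<in>{0..n}. cc x j * (if p ^ aa m p j dvd k then 1 else 0))
      = (\<Sum>j\<in>{0..n}. if j \<le> ee m p k then cc x j else 0)"
    by (intro sum.cong refl) (simp add: iff)
  also have "\<dots> = (\<Sum>j\<in>{j\<in>{0..n}. j \<le> ee m p k}. cc x j)"
    by (rule sum.inter_filter[symmetric]) simp
  also have "{j\<in>{0..n}. j \<le> ee m p k} = {0..ee m p k}" using en by auto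
  finally show ?thesis by (simp add: cc_telescope)
qed


lemma geom_le:
  fixes r :: real
  assumes "0 \<le> r" "r < 1"
  shows "(\<Sum>i<n. r ^ i) \<le> 1 / (1 - r)"
proof -
  have "(\<Sum>i<n. r ^ i) = (1 - r ^ n) / (1 - r)" using assms by (simp add: sum_gp_strict)
  also have "\<dots> \<le> 1 / (1 - r)" using assms by (intro divide_right_mono) auto
  finally show ?thesis .
qed

lemma factor_bound:
  fixes p :: nat and x :: real and b :: nat
  assumes p: "p \<ge> 2" and x: "1 \<le> x" "x \<le> sqrt (real p)"
  shows "(\<Sum>j\<in>{0..n}. cc x j / real (p ^ (if j = 0 then 0 else j + b)))
           \<le> 1 + 4 * (x - 1) / real p ^ Suc b"
proof -
  have pp: "real p \<ge> 2" using p by simp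
  define r where "r = x / real p"
  have sq: "sqrt (real p) \<le> 3/4 * real p"
  proof -
    have "sqrt (real p) * sqrt (real p) = real p" by simp
    moreover have "sqrt (real p) \<ge> 4/3"
    proof -
      have "sqrt (16/9) \<le> sqrt (real p)" using pp by (intro real_sqrt_le_mono) auto
      moreover have "sqrt (16/9::real) = 4/3" by (simp add: real_sqrt_divide)
      ultimately show ?thesis by simp
    qed
    moreover have "4/3 * sqrt (real p) \<le> sqrt (real p) * sqrt (real p)"
      using \<open>sqrt (real p) \<ge> 4/3\<close> by (intro mult_right_mono) auto
    ultimately show ?thesis by linarith
  qed
  have r0: "0 \<le> r" "r \<le> 3/4" using x sq pp by (auto simp: r_def field_simps)
  have "(\<Sum>j\<in>{0..n}. cc x j / real (p ^ (if j = 0 then 0 else j + b)))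
     = 1 + (\<Sum>j\<in>{1..n}. cc x j / real (p ^ (if j = 0 then 0 else j + b)))"
    by (simp add: sum.atLeast_Suc_atMost cc_def)
  also have "(\<Sum>j\<in>{1..n}. cc x j / real (p ^ (if j = 0 then 0 else j + b)))
      = (\<Sum>i<n. cc x (Suc i) / real (p ^ (Suc i + b)))"
    using sum.atLeast1_atMost_eq[of "\<lambda>j. cc x j / real (p ^ (if j = 0 then 0 else j + b))" n] by simp
  also have "\<dots> = (\<Sum>i<n. (x - 1) / real p ^ Suc b * r ^ i)"
    by (intro sum.cong refl) (simp add: cc_def r_def power_add field_simps)
  also have "\<dots> = (x - 1) / real p ^ Suc b * (\<Sum>i<n. r ^ i)"
    by (simp add: sum_distrib_left)
  also have "\<dots> \<le> (x - 1) / real p ^ Suc b * 4"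
  proof (intro mult_left_mono)
    have "(\<Sum>i<n. r ^ i) \<le> 1 / (1 - r)" using r0 by (intro geom_le) auto
    also have "\<dots> \<le> 4" using r0 by (simp add: field_simps)
    finally show "(\<Sum>i<n. r ^ i) \<le> 4" .
    show "0 \<le> (x - 1) / real p ^ Suc b" using x pp by simp
  qed
  finally show ?thesis by (simp add: mult.commute)
qed


lemma ln_ge_4: assumes "81 \<le> m" shows "4 \<le> ln (real m)"
proof -
  have "exp (4::real) = exp 1 ^ 4" using exp_of_nat_mult[of 4 "1::real"] by simp
  also have "\<dots> \<le> 3 ^ 4" using exp_le by (intro power_mono) auto
  also have "\<dots> \<le> real m" using assms by simp
  finally have "exp 4 \<le> real m" .
  thus ?thesis using assms by (subst ln_ge_iff) auto
qed

lemma exp_minus_one_le: assumes "0 \<le> (y::real)" shows "exp y - 1 \<le> y * exp y"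
proof -
  have "1 - y \<le> exp (- y)" using exp_ge_add_one_self[of "-y"] by simp
  hence "(1 - y) * exp y \<le> exp (-y) * exp y" by (intro mult_right_mono) auto
  also have "\<dots> = 1" by (simp add: exp_minus field_simps)
  finally show ?thesis by (simp add: algebra_simps)
qed

lemma G_bound:
  assumes m: "81 \<le> m" and n: "1 \<le> n"
  shows "(\<Sum>k\<in>{1..n}. exp (2 / ln (real m) * (ln (real k) - ln (real (Utilde n m k)))))
           \<le> real n * exp (16 * exp 2 + 12)"
proof -
  define L where "L = ln (real m)"
  define t where "t = 2 / L"
  have L4: "4 \<le> L" unfolding L_def by (rule ln_ge_4[OF m])
  have t0: "0 < t" "t \<le> 1/2" using L4 by (auto simp: t_def field_simps)
  define Pn where "Pn = {p. prime p \<and> p \<le> n}"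
  have finPn: "finite Pn" unfolding Pn_def by simp
  define x where "x p = exp (t * ln (real p))" for p :: nat
  have x1: "1 \<le> x p" if "p \<in> Pn" for p
  proof -
    have "1 \<le> real p" using that by (auto simp: Pn_def dest: prime_gt_0_nat)
    hence "0 \<le> ln (real p)" by simp
    thus ?thesis using t0 by (simp add: x_def)
  qed
  have xs: "x p \<le> sqrt (real p)" if "p \<in> Pn" for p
  proof -
    have lp: "0 \<le> ln (real p)" using that by (auto simp: Pn_def prime_ln_nonneg)
    have "t * ln (real p) \<le> 1/2 * ln (real p)" using lp t0 by (intro mult_right_mono) auto
    hence "x p \<le> exp (ln (real p) / 2)" unfolding x_def by simp
    also have "\<dots> = sqrt (real p)"
      using that by (simp add: Pn_def prime_gt_0_nat powr_half_sqrt[symmetric] powr_def)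
    finally show ?thesis .
  qed
  have cc0: "0 \<le> cc (x p) j" if "p \<in> Pn" for p j
  proof (cases j)
    case (Suc i)
    have "x p ^ i \<le> x p ^ Suc i" using x1[OF that] by (simp add: power_increasing)
    thus ?thesis using Suc by (simp add: cc_def)
  qed (simp add: cc_def)
  have repr: "exp (t * (ln (real k) - ln (real (Utilde n m k))))
      = (\<Prod>p\<in>Pn. \<Sum>j\<in>{0..n}. cc (x p) j * (if p ^ aa m p j dvd k then 1 else 0))"
    if k: "k \<in> {1..n}" for k
  proof -
    have "exp (t * (ln (real k) - ln (real (Utilde n m k))))
        = exp (\<Sum>p\<in>Pn. real (ee m p k) * (t * ln (real p)))"
      using k by (simp add: ln_diff Pn_def sum_distrib_left algebra_simps)
    also have "\<dots> = (\<Prod>p\<in>Pn. x p ^ ee m p k)"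
      by (simp add: exp_sum[OF finPn] exp_of_nat_mult x_def)
    also have "\<dots> = (\<Prod>p\<in>Pn. \<Sum>j\<in>{0..n}. cc (x p) j * (if p ^ aa m p j dvd k then 1 else 0))"
      using k by (intro prod.cong refl pow_repr) (auto simp: Pn_def)
    finally show ?thesis .
  qed
  define y where "y p = (if p \<le> m then 4 * exp 2 * t * (ln (real p) / real p) else 0)
                        + 4 / (real p * sqrt (real p))" for p :: nat
  have fac: "(\<Sum>j\<in>{0..n}. cc (x p) j / real (p ^ aa m p j)) \<le> 1 + y p" if p: "p \<in> Pn" for p
  proof -
    have p2: "p \<ge> 2" using p by (auto simp: Pn_def prime_ge_2_nat)
    have pr: "real p > 0" using p2 by simp
    have lp: "0 \<le> ln (real p)" using p2 by simp
    have "(\<Sum>j\<in>{0..n}. cc (x p) j / real (p ^ aa m p j))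
        = (\<Sum>j\<in>{0..n}. cc (x p) j / real (p ^ (if j = 0 then 0 else j + (if p \<le> m then 0 else 1))))"
      by (simp add: aa_def)
    also have "\<dots> \<le> 1 + 4 * (x p - 1) / real p ^ Suc (if p \<le> m then 0 else 1)"
      by (rule factor_bound[OF p2 x1[OF p] xs[OF p]])
    also have "\<dots> \<le> 1 + y p"
    proof (cases "p \<le> m")
      case True
      have lpm: "ln (real p) \<le> L" unfolding L_def using True p2 by simp
      have ty: "t * ln (real p) \<le> 2" using lpm t0 L4 unfolding t_def by (simp add: field_simps)
      have "x p - 1 \<le> t * ln (real p) * exp (t * ln (real p))"
        unfolding x_def using t0 lp by (intro exp_minus_one_le) simp
      also have "\<dots> \<le> t * ln (real p) * exp 2"
        using ty t0 lp by (intro mult_left_mono) auto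
      finally have "4 * (x p - 1) / real p \<le> 4 * (t * ln (real p) * exp 2) / real p"
        using pr by (intro divide_right_mono) auto
      moreover have "0 \<le> 4 / (real p * sqrt (real p))" by simp
      moreover have "4 * (t * ln (real p) * exp 2) / real p = 4 * exp 2 * t * (ln (real p) / real p)"
        by simp
      moreover have "y p = 4 * exp 2 * t * (ln (real p) / real p) + 4 / (real p * sqrt (real p))"
        using True by (simp add: y_def)
      moreover have "4 * (x p - 1) / real p ^ Suc (if p \<le> m then 0 else 1) = 4 * (x p - 1) / real p"
        using True by simp
      ultimately show ?thesis by linarith
    next
      case False
      have e: "real p ^ 2 = sqrt (real p) ^ 2 * sqrt (real p) ^ 2" using pr by (simp add: power2_eq_square)
      have "4 * (x p - 1) \<le> 4 * sqrt (real p)" using xs[OF p] x1[OF p] by (simp add: algebra_simps)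
      hence "4 * (x p - 1) / real p ^ 2 \<le> 4 * sqrt (real p) / real p ^ 2"
        by (intro divide_right_mono) auto
      also have "\<dots> = 4 * sqrt (real p) / (sqrt (real p) ^ 2 * sqrt (real p) ^ 2)"
        by (subst e) (rule refl)
      also have "\<dots> = 4 / (real p * sqrt (real p))"
        using pr by (simp add: power2_eq_square field_simps)
      finally show ?thesis using False by (simp add: y_def power2_eq_square)
    qed
    finally show ?thesis .
  qed
  have "(\<Sum>k\<in>{1..n}. exp (t * (ln (real k) - ln (real (Utilde n m k)))))
      = (\<Sum>k\<in>{1..n}. \<Prod>p\<in>Pn. \<Sum>j\<in>{0..n}. cc (x p) j * (if p ^ aa m p j dvd k then 1 else 0))"
    by (intro sum.cong refl repr)
  also have "\<dots> \<le> real n * (\<Prod>p\<in>Pn. \<Sum>j\<in>{0..n}. cc (x p) j / real (p ^ aa m p j))"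
  proof -
    have "(\<Sum>k\<in>{1..n}. \<Prod>p\<in>Pn. \<Sum>j\<in>{0..n}. (\<lambda>p j. if p \<in> Pn then cc (x p) j else 0) p j * (if p ^ aa m p j dvd k then 1 else 0))
       \<le> real n * (\<Prod>p\<in>Pn. \<Sum>j\<in>{0..n}. (\<lambda>p j. if p \<in> Pn then cc (x p) j else 0) p j / real (p ^ aa m p j))"
      by (rule key_divisor_bound) (auto simp: finPn Pn_def cc0)
    thus ?thesis by (simp cong: prod.cong)
  qed
  also have "\<dots> \<le> real n * (\<Prod>p\<in>Pn. exp (y p))"
  proof (intro mult_left_mono prod_mono conjI)
    fix p assume p: "p \<in> Pn"
    show "0 \<le> (\<Sum>j\<in>{0..n}. cc (x p) j / real (p ^ aa m p j))"
      using p cc0 by (intro sum_nonneg divide_nonneg_nonneg) auto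
    have "0 \<le> ln (real p)" using p by (auto simp: Pn_def prime_ln_nonneg)
    hence "0 \<le> 4 * exp 2 * t * (ln (real p) / real p)" using t0 by simp
    hence "0 \<le> y p" unfolding y_def by simp
    have "1 + y p \<le> exp (y p)" by (rule exp_ge_add_one_self)
    thus "(\<Sum>j\<in>{0..n}. cc (x p) j / real (p ^ aa m p j)) \<le> exp (y p)"
      using fac[OF p] by linarith
  qed simp
  also have "(\<Prod>p\<in>Pn. exp (y p)) = exp (\<Sum>p\<in>Pn. y p)" by (simp add: exp_sum[OF finPn])
  also have "(\<Sum>p\<in>Pn. y p) \<le> 16 * exp 2 + 12"
  proof -
    have "(\<Sum>p\<in>Pn. y p) = (\<Sum>p\<in>Pn. if p \<le> m then 4 * exp 2 * t * (ln (real p) / real p) else 0)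
          + (\<Sum>p\<in>Pn. 4 / (real p * sqrt (real p)))"
      unfolding y_def by (simp add: sum.distrib)
    also have "(\<Sum>p\<in>Pn. if p \<le> m then 4 * exp 2 * t * (ln (real p) / real p) else 0)
        = (\<Sum>p\<in>{p\<in>Pn. p \<le> m}. 4 * exp 2 * t * (ln (real p) / real p))"
      by (rule sum.inter_filter[symmetric, OF finPn])
    also have "\<dots> \<le> (\<Sum>p\<in>{p. prime p \<and> p \<le> m}. 4 * exp 2 * t * (ln (real p) / real p))"
    proof (rule sum_mono2)
      show "{p \<in> Pn. p \<le> m} \<subseteq> {p. prime p \<and> p \<le> m}" unfolding Pn_def by auto
    qed (use t0 in \<open>auto simp: prime_ln_nonneg\<close>)
    also have "\<dots> = 4 * exp 2 * t * (\<Sum>p\<in>{p. prime p \<and> p \<le> m}. ln (real p) / real p)"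
      by (simp add: sum_distrib_left)
    also have "\<dots> \<le> 4 * exp 2 * t * (2 * L)"
      unfolding L_def using m t0 by (intro mult_left_mono mertens_weak) auto
    also have "\<dots> = 16 * exp 2" using L4 by (simp add: t_def)
    also have "(\<Sum>p\<in>Pn. 4 / (real p * sqrt (real p))) \<le> (\<Sum>k\<in>{1..n}. 4 / (real k * sqrt (real k)))"
    proof (rule sum_mono2)
      show "Pn \<subseteq> {1..n}" unfolding Pn_def using prime_Suc0 by auto
    qed auto
    also have "\<dots> = 4 * (\<Sum>k\<in>{1..n}. 1 / (real k * sqrt (real k)))"
      by (simp add: sum_distrib_left)
    also have "\<dots> \<le> 4 * (3 - 2 / sqrt (real n))"
      using n by (intro mult_left_mono sum_inv_pow32) auto
    also have "\<dots> \<le> 12" by simp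
    finally show ?thesis by simp
  qed
  hence "exp (\<Sum>p\<in>Pn. y p) \<le> exp (16 * exp 2 + 12)" by simp
  hence "real n * exp (\<Sum>p\<in>Pn. y p) \<le> real n * exp (16 * exp 2 + 12)"
    by (intro mult_left_mono) auto
  finally show ?thesis unfolding t_def L_def .
qed


lemma diff4_le: fixes a b :: real assumes "0 \<le> a" "0 \<le> b" shows "(a - b) ^ 4 \<le> a ^ 4 + b ^ 4"
proof (cases "a \<le> b")
  case True
  have "(a - b) ^ 4 = (- (b - a)) ^ 4" by (simp only: minus_diff_eq)
  also have "\<dots> = (b - a) ^ 4" by (rule power_minus_even) simp
  also have "\<dots> \<le> b ^ 4" using True assms by (intro power_mono) auto
  finally show ?thesis using assms by (smt (verit) zero_le_power)
next
  case False
  have "(a - b) ^ 4 \<le> a ^ 4" using False assms by (intro power_mono) auto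
  thus ?thesis using assms by (smt (verit) zero_le_power)
qed

lemma expect_U: "n \<ge> 1 \<Longrightarrow> measure_pmf.expectation (U_law n) f = (\<Sum>k\<in>{1..n}. f k) / real n"
  unfolding U_law_def by (subst integral_pmf_of_set) auto

lemma sum_sqrt_ratio:
  assumes m: "81 \<le> m" and n: "1 \<le> n"
  shows "(\<Sum>k\<in>{1..n}. exp (2 / ln (real m) * (ln (real n) - ln (real k)))) \<le> 2 * real n"
proof -
  have L4: "4 \<le> ln (real m)" by (rule ln_ge_4[OF m])
  have t: "2 / ln (real m) \<le> 1/2" using L4 by (simp add: field_simps)
  have "(\<Sum>k\<in>{1..n}. exp (2 / ln (real m) * (ln (real n) - ln (real k))))
     \<le> (\<Sum>k\<in>{1..n}. sqrt (real n) * (1 / sqrt (real k)))"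
  proof (rule sum_mono)
    fix k assume k: "k \<in> {1..n}"
    have d: "0 \<le> ln (real n) - ln (real k)" using k by auto
    have "2 / ln (real m) * (ln (real n) - ln (real k)) \<le> 1/2 * (ln (real n) - ln (real k))"
      using t d by (intro mult_right_mono) auto
    hence "exp (2 / ln (real m) * (ln (real n) - ln (real k))) \<le> exp (ln (real n) / 2 - ln (real k) / 2)"
      by (simp add: algebra_simps)
    also have "\<dots> = exp (ln (real n) / 2) / exp (ln (real k) / 2)" by (rule exp_diff)
    also have "exp (ln (real n) / 2) = sqrt (real n)"
      using n by (simp add: powr_half_sqrt[symmetric] powr_def)
    also have "exp (ln (real k) / 2) = sqrt (real k)"
      using k by (simp add: powr_half_sqrt[symmetric] powr_def)
    finally show "exp (2 / ln (real m) * (ln (real n) - ln (real k))) \<le> sqrt (real n) * (1 / sqrt (real k))"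
      by simp
  qed
  also have "\<dots> = sqrt (real n) * (\<Sum>k\<in>{1..n}. 1 / sqrt (real k))" by (simp add: sum_distrib_left)
  also have "\<dots> \<le> sqrt (real n) * (2 * sqrt (real n))" by (intro mult_left_mono sum_inv_sqrt) auto
  also have "\<dots> = 2 * real n" by simp
  finally show ?thesis .
qed

definition KK :: real where "KK = 1 + exp (16 * exp 2 + 12) / 2"

lemma main_bound:
  assumes m: "81 \<le> m" and n: "1 \<le> n"
  shows "measure_pmf.expectation (U_law n)
            (\<lambda>k. (ln (real (Utilde n m k))
                  - measure_pmf.expectation (U_law n) (\<lambda>j. ln (real (Utilde n m j)))) ^ 4)
         \<le> (KK ^ 4 + 256 * KK) * ln (real m) ^ 4"
proof -
  define L where "L = ln (real m)"
  have L4: "4 \<le> L" unfolding L_def by (rule ln_ge_4[OF m])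
  define s where "s = 1 / L"
  have s0: "0 < s" using L4 by (simp add: s_def)
  define W where "W k = ln (real n) - ln (real (Utilde n m k))" for k
  have nr: "real n > 0" using n by simp
  have W0: "0 \<le> W k" if k: "k \<in> {1..n}" for k
  proof -
    have "0 \<le> (\<Sum>p\<in>{p. prime p \<and> p \<le> n}. real (ee m p k) * ln (real p))"
      by (intro sum_nonneg mult_nonneg_nonneg) (auto simp: prime_ln_nonneg)
    hence "ln (real (Utilde n m k)) \<le> ln (real k)" using ln_diff[of k n m] k by simp
    moreover have "ln (real k) \<le> ln (real n)" using k by auto
    ultimately show ?thesis by (simp add: W_def)
  qed
  have expW: "exp (s * W k) \<le> (exp (2 / L * (ln (real n) - ln (real k)))
                + exp (2 / L * (ln (real k) - ln (real (Utilde n m k))))) / 2"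
    if k: "k \<in> {1..n}" for k
  proof -
    define a where "a = exp (s * (ln (real n) - ln (real k)))"
    define b where "b = exp (s * (ln (real k) - ln (real (Utilde n m k))))"
    have "exp (s * W k) = a * b" by (simp add: a_def b_def W_def exp_add[symmetric] algebra_simps)
    also have "\<dots> \<le> (a ^ 2 + b ^ 2) / 2"
      using sum_squares_bound[of a b] by (simp add: power2_diff field_simps)
    also have "a ^ 2 = exp (2 / L * (ln (real n) - ln (real k)))"
      by (simp add: a_def s_def exp_of_nat_mult[symmetric] power2_eq_square exp_add[symmetric])
    also have "b ^ 2 = exp (2 / L * (ln (real k) - ln (real (Utilde n m k))))"
      by (simp add: b_def s_def exp_of_nat_mult[symmetric] power2_eq_square exp_add[symmetric])
    finally show ?thesis .
  qed
  have sumexp: "(\<Sum>k\<in>{1..n}. exp (s * W k)) \<le> real n * KK"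
  proof -
    have "(\<Sum>k\<in>{1..n}. exp (s * W k)) \<le> (\<Sum>k\<in>{1..n}. (exp (2 / L * (ln (real n) - ln (real k)))
                + exp (2 / L * (ln (real k) - ln (real (Utilde n m k))))) / 2)"
      by (intro sum_mono expW)
    also have "\<dots> = ((\<Sum>k\<in>{1..n}. exp (2 / L * (ln (real n) - ln (real k))))
          + (\<Sum>k\<in>{1..n}. exp (2 / L * (ln (real k) - ln (real (Utilde n m k)))))) / 2"
      by (simp only: sum.distrib[symmetric] sum_divide_distrib)
    also have "\<dots> \<le> (2 * real n + real n * exp (16 * exp 2 + 12)) / 2"
      using sum_sqrt_ratio[OF m n] G_bound[OF m n] unfolding L_def by simp
    also have "\<dots> = real n * KK" by (simp add: KK_def algebra_simps)
    finally show ?thesis .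
  qed
  have W1: "W k \<le> L * exp (s * W k)" if "k \<in> {1..n}" for k
  proof -
    have "s * W k \<le> exp (s * W k)" using exp_ge_add_one_self[of "s * W k"] by linarith
    hence "L * (s * W k) \<le> L * exp (s * W k)" using L4 by (intro mult_left_mono) auto
    thus ?thesis using L4 by (simp add: s_def)
  qed
  have W4: "W k ^ 4 \<le> 256 * L ^ 4 * exp (s * W k)" if k: "k \<in> {1..n}" for k
  proof -
    have "s * W k / 4 \<le> exp (s * W k / 4)" using exp_ge_add_one_self[of "s * W k / 4"] by linarith
    hence "(s * W k / 4) ^ 4 \<le> exp (s * W k / 4) ^ 4"
      using W0[OF k] s0 by (intro power_mono) auto
    also have "\<dots> = exp (s * W k)" by (simp add: exp_of_nat_mult[symmetric])
    finally have "(s * W k / 4) ^ 4 \<le> exp (s * W k)" .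
    hence "256 * L ^ 4 * (s * W k / 4) ^ 4 \<le> 256 * L ^ 4 * exp (s * W k)"
      by (intro mult_left_mono) auto
    moreover have "256 * L ^ 4 * (s * W k / 4) ^ 4 = W k ^ 4"
      using L4 by (simp add: s_def power_mult_distrib power_divide)
    ultimately show ?thesis by simp
  qed
  define M where "M = (\<Sum>k\<in>{1..n}. W k) / real n"
  have M0: "0 \<le> M" unfolding M_def using W0 by (intro divide_nonneg_nonneg sum_nonneg) auto
  have M1: "M \<le> L * KK"
  proof -
    have "(\<Sum>k\<in>{1..n}. W k) \<le> (\<Sum>k\<in>{1..n}. L * exp (s * W k))" by (intro sum_mono W1)
    also have "\<dots> = L * (\<Sum>k\<in>{1..n}. exp (s * W k))" by (simp add: sum_distrib_left)
    also have "\<dots> \<le> L * (real n * KK)" using L4 sumexp by (intro mult_left_mono) auto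
    finally show ?thesis unfolding M_def using nr by (simp add: field_simps)
  qed
  have EV: "measure_pmf.expectation (U_law n) (\<lambda>j. ln (real (Utilde n m j))) = ln (real n) - M"
  proof -
    have "measure_pmf.expectation (U_law n) (\<lambda>j. ln (real (Utilde n m j)))
        = (\<Sum>k\<in>{1..n}. ln (real n) - W k) / real n" by (simp add: expect_U[OF n] W_def)
    also have "\<dots> = ln (real n) - M" using nr by (simp add: sum_subtractf M_def field_simps)
    finally show ?thesis .
  qed
  have "measure_pmf.expectation (U_law n)
            (\<lambda>k. (ln (real (Utilde n m k))
                  - measure_pmf.expectation (U_law n) (\<lambda>j. ln (real (Utilde n m j)))) ^ 4)
      = (\<Sum>k\<in>{1..n}. (M - W k) ^ 4) / real n"
    unfolding EV by (simp add: expect_U[OF n] W_def diff_diff_eq2 add.commute)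
  also have "\<dots> \<le> (\<Sum>k\<in>{1..n}. M ^ 4 + 256 * L ^ 4 * exp (s * W k)) / real n"
  proof (intro divide_right_mono sum_mono)
    fix k assume k: "k \<in> {1..n}"
    have "(M - W k) ^ 4 \<le> M ^ 4 + W k ^ 4" using M0 W0[OF k] by (rule diff4_le)
    thus "(M - W k) ^ 4 \<le> M ^ 4 + 256 * L ^ 4 * exp (s * W k)" using W4[OF k] by linarith
  qed simp
  also have "\<dots> = M ^ 4 + 256 * L ^ 4 * (\<Sum>k\<in>{1..n}. exp (s * W k)) / real n"
    using nr by (simp add: sum.distrib sum_distrib_left field_simps)
  also have "\<dots> \<le> (L * KK) ^ 4 + 256 * L ^ 4 * (real n * KK) / real n"
  proof (intro add_mono divide_right_mono mult_left_mono power_mono)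
  qed (use M0 M1 sumexp in auto)
  also have "\<dots> = (KK ^ 4 + 256 * KK) * L ^ 4"
    using nr by (simp add: power_mult_distrib algebra_simps)
  finally show ?thesis unfolding L_def .
qed


theorem lemma5p6:
  fixes m :: "nat \<Rightarrow> nat"
  assumes "filterlim m at_top sequentially"
    and "(\<lambda>n. real (m n)) \<in> o(\<lambda>n. real n)"
  shows "(\<lambda>n. measure_pmf.expectation (U_law n)
            (\<lambda>k. (ln (real (Utilde n (m n) k))
                  - measure_pmf.expectation (U_law n) (\<lambda>j. ln (real (Utilde n (m n) j)))) ^ 4))
         \<in> O(\<lambda>n. (ln (real (m n))) ^ 4)"
proof (rule bigoI)
  have ev1: "eventually (\<lambda>n. 81 \<le> m n) sequentially"
    using assms(1) by (simp add: filterlim_at_top)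
  have ev2: "eventually (\<lambda>n. 1 \<le> n) sequentially" by (rule eventually_ge_at_top)
  show "eventually (\<lambda>n. norm (measure_pmf.expectation (U_law n)
            (\<lambda>k. (ln (real (Utilde n (m n) k))
                  - measure_pmf.expectation (U_law n) (\<lambda>j. ln (real (Utilde n (m n) j)))) ^ 4))
         \<le> (KK ^ 4 + 256 * KK) * norm ((ln (real (m n))) ^ 4)) sequentially"
    using ev1 ev2
  proof eventually_elim
    case (elim n)
    let ?E = "measure_pmf.expectation (U_law n)
            (\<lambda>k. (ln (real (Utilde n (m n) k))
                  - measure_pmf.expectation (U_law n) (\<lambda>j. ln (real (Utilde n (m n) j)))) ^ 4)"
    have "0 \<le> ?E" using elim
      by (subst expect_U) (auto intro!: divide_nonneg_nonneg sum_nonneg simp: zero_le_even_power)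
    hence "norm ?E = ?E" by simp
    also have "\<dots> \<le> (KK ^ 4 + 256 * KK) * ln (real (m n)) ^ 4" by (rule main_bound) (use elim in auto)
    also have "\<dots> \<le> (KK ^ 4 + 256 * KK) * norm (ln (real (m n)) ^ 4)"
      by (intro mult_left_mono) (auto simp: KK_def intro!: add_nonneg_nonneg)
    finally show ?case .
  qed
qed

end
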